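(* Suppose that the integral quadruple $(a,b,c,d)$ with $d>c>b>a\ge2$ satisfies: (1) $a,b,c,d$ are pairwise coprime; (2) $\frac{1}{a}+\frac{1}{b}+\frac{1}{c}+\frac{1}{d}=1+\frac{1}{abcd}$. Then $(a,b,c,d)$ is either $(2,3,7,41)$ or $(2,3,11,13)$. *)

theory Defs
  imports Complex_Main
begin

end

theory Submission
  imports Defs
begin

lemma inv_le_aux: "0 < k \<Longrightarrow> k \<le> x \<Longrightarrow> 1 / (of_int x :: rat) \<le> 1 / of_int k"
  by (simp add: frac_le)

theorem proposition3p1:
  fixes a b c d :: int
  assumes "2 \<le> a" and "a < b" and "b < c" and "c < d"
    and "coprime a b" and "coprime a c" and "coprime a d"
    and "coprime b c" and "coprime b d" and "coprime c d"
    and "1 / of_int a + 1 / of_int b + 1 / of_int c + 1 / of_int d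
         = (1 :: rat) + 1 / of_int (a * b * c * d)"
  shows "(a, b, c, d) = (2, 3, 7, 41) \<or> (a, b, c, d) = (2, 3, 11, 13)"
proof -
  note E = assms(11)
  have pos: "a * b * c * d > 0" using assms(1-4) by simp
  have "(0::rat) < 1 / of_int (a * b * c * d)" using pos by (simp only: zero_less_divide_1_iff of_int_pos)
  hence gt: "1 / of_int a + 1 / of_int b + 1 / of_int c + 1 / of_int d > (1::rat)" using E by linarith
  have a4: "a < 4"
  proof (rule ccontr)
    assume "\<not> a < 4"
    hence "1 / (of_int a::rat) \<le> 1 / of_int 4" "1 / (of_int b::rat) \<le> 1 / of_int 5"
      "1 / (of_int c::rat) \<le> 1 / of_int 6" "1 / (of_int d::rat) \<le> 1 / of_int 7"
      using assms(2-4) by (intro inv_le_aux; simp)+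
    thus False using gt by simp
  qed
  have a3: "a \<noteq> 3"
  proof
    assume "a = 3"
    hence "1 / (of_int a::rat) \<le> 1 / of_int 3" "1 / (of_int b::rat) \<le> 1 / of_int 4"
      "1 / (of_int c::rat) \<le> 1 / of_int 5" "1 / (of_int d::rat) \<le> 1 / of_int 6"
      using assms(2-4) by (intro inv_le_aux; simp)+
    thus False using gt by simp
  qed
  have a2: "a = 2" using a4 a3 assms(1) by simp
  have ob: "odd b" and oc: "odd c" using assms(5,6) a2 by simp_all
  have b5: "b < 5"
  proof (rule ccontr)
    assume "\<not> b < 5"
    hence c7: "c \<ge> 7" using oc assms(3) by presburger
    have "1 / (of_int a::rat) \<le> 1 / of_int 2" "1 / (of_int b::rat) \<le> 1 / of_int 5"
      "1 / (of_int c::rat) \<le> 1 / of_int 7" "1 / (of_int d::rat) \<le> 1 / of_int 8"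
      using assms(2-4) a2 c7 \<open>\<not> b < 5\<close> by (intro inv_le_aux; simp)+
    thus False using gt by simp
  qed
  have b3: "b = 3" using b5 ob a2 assms(2) by presburger
  have c3: "\<not> 3 dvd c"
  proof
    assume "3 dvd c"
    hence "is_unit (3::int)" using assms(8) b3 coprime_common_divisor by fastforce
    thus False by simp
  qed
  have eq: "of_int (3*c*d + 2*c*d + 6*d + 6*c) = (of_int (6*c*d + 1) :: rat)"
  proof -
    have nz: "(of_int c::rat) \<noteq> 0" "(of_int d::rat) \<noteq> 0" using assms(3,4) b3 by auto
    have E2: "1/2 + 1/3 + 1/of_int c + 1/of_int d = 1 + 1/(6 * of_int c * (of_int d::rat))"
      using E a2 b3 by simp
    have L: "(1/2 + 1/3 + 1/of_int c + 1/of_int d) * (6 * of_int c * (of_int d::rat))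
      = 5 * of_int c * of_int d + 6 * of_int d + 6 * of_int c" using nz by (simp add: field_simps)
    have R: "(1 + 1/(6 * of_int c * (of_int d::rat))) * (6 * of_int c * (of_int d::rat))
      = 6 * of_int c * of_int d + 1" using nz by (simp add: field_simps)
    show ?thesis using E2 L R by simp
  qed
  hence eqi: "3*c*d + 2*c*d + 6*d + 6*c = 6*c*d + 1" by (simp only: of_int_eq_iff)
  hence key: "(c - 6) * (d - 6) = 35" by (simp add: algebra_simps)
  have c12: "c < 12"
  proof (rule ccontr)
    assume "\<not> c < 12"
    hence "6 * 7 \<le> (c - 6) * (d - 6)" using assms(4) by (intro mult_mono) auto
    thus False using key by simp
  qed
  have "c = 5 \<or> c = 7 \<or> c = 11" using c12 c3 oc assms(3) b3 by presburger
  thus ?thesis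
  proof (elim disjE)
    assume "c = 5" thus ?thesis using key assms(4) by simp
  next
    assume "c = 7" thus ?thesis using key a2 b3 by simp
  next
    assume "c = 11" thus ?thesis using key a2 b3 by simp
  qed
qed

end
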